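(* Let $\mathcal W$ be a discrete memoryless channel from finite $\mathcal X$ to finite $\mathcal Y$. Then: (1) $U(\mathcal W)\ge0$, with equality if and only if $\mathcal W(\cdot|x)$ does not depend on $x\in\mathcal X$. (2) $U(\mathcal W)<\infty$ if and only if there exists $y\in\mathcal Y$ with $\mathcal W(y|x)>0$ for all $x\in\mathcal X$. (3) The map $\mathcal W\mapsto U(\mathcal W)$ is convex on the set of channels from $\mathcal X$ to $\mathcal Y$.
   Context: $D(P\|Q)=\sum P\log(P/Q)$ ($0\log(0/q)=0$; $+\infty$ if $P\not\ll Q$). $U(\mathcal W)=\max_{P_X\in\mathcal P(\mathcal X)}\min_{Q_Y\in\mathcal P(\mathcal Y)}D(P_X\times Q_Y\|P_{XY})$, $P_{XY}(x,y)=P_X(x)\mathcal W(y|x)$. *)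

theory Defs
  imports "HOL-Analysis.Analysis"
begin

definition distr :: "('a::finite \<Rightarrow> real) \<Rightarrow> bool" where
  "distr P \<longleftrightarrow> (\<forall>a. 0 \<le> P a) \<and> (\<Sum>a\<in>UNIV. P a) = 1"

definition channel :: "('x::finite \<Rightarrow> 'y::finite \<Rightarrow> real) \<Rightarrow> bool" where
  "channel W \<longleftrightarrow> (\<forall>x. distr (W x))"

definition KL :: "('a::finite \<Rightarrow> real) \<Rightarrow> ('a \<Rightarrow> real) \<Rightarrow> ereal" where
  "KL P Q = (if \<forall>a. P a \<noteq> 0 \<longrightarrow> Q a \<noteq> 0
             then ereal (\<Sum>a\<in>UNIV. if P a = 0 then 0 else P a * ln (P a / Q a))
             else \<infinity>)"

definition U :: "('x::finite \<Rightarrow> 'y::finite \<Rightarrow> real) \<Rightarrow> ereal" where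
  "U W = (SUP P\<in>{P. distr P}. INF Q\<in>{Q. distr Q}.
            KL (\<lambda>(x,y). P x * Q y) (\<lambda>(x,y). P x * W x y))"

end

theory Submission
  imports Defs
begin


definition gg :: "real \<Rightarrow> real \<Rightarrow> real" where
  "gg a b = (if a = 0 then 0 else a * ln (a / b))"

lemma KL_gg: "KL P Q = (if \<forall>a. P a \<noteq> 0 \<longrightarrow> Q a \<noteq> 0
             then ereal (\<Sum>a\<in>UNIV. gg (P a) (Q a)) else \<infinity>)"
  unfolding KL_def gg_def by simp

lemma gg_lower: assumes "0 \<le> a" "0 \<le> b" "a \<noteq> 0 \<longrightarrow> b \<noteq> 0" shows "a - b \<le> gg a b"
proof (cases "a = 0")
  case True then show ?thesis using assms by (simp add: gg_def)
next
  case False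
  then have a: "a > 0" and b: "b > 0" using assms by auto
  have "ln (b / a) \<le> b / a - 1" using a b by (intro ln_le_minus_one) simp
  then have "a * ln (b/a) \<le> a * (b/a - 1)" using a by (intro mult_left_mono) auto
  also have "\<dots> = b - a" using a by (simp add: field_simps)
  finally have "a * ln b - a * ln a \<le> b - a" using a b by (simp add: ln_div right_diff_distrib)
  then show ?thesis using False a b by (simp add: gg_def ln_div right_diff_distrib)
qed

lemma gg_scale: assumes "t > 0" shows "gg (t*a) (t*b) = t * gg a b"
  using assms by (simp add: gg_def)

lemma logsum2:
  assumes "0 \<le> x1" "0 \<le> x2" "0 \<le> y1" "0 \<le> y2" "x1 \<noteq> 0 \<longrightarrow> y1 \<noteq> 0" "x2 \<noteq> 0 \<longrightarrow> y2 \<noteq> 0"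
  shows "gg (x1+x2) (y1+y2) \<le> gg x1 y1 + gg x2 y2"
proof -
  consider "x1 = 0" | "x2 = 0" | "x1 > 0 \<and> x2 > 0" using assms by force
  then show ?thesis
  proof cases
    case 1
    show ?thesis
    proof (cases "x2 = 0")
      case True then show ?thesis using 1 by (simp add: gg_def)
    next
      case False
      then have "x2 > 0" "y2 > 0" using assms by auto
      then have "ln (x2/(y1+y2)) \<le> ln (x2/y2)" using assms
        by (simp add: divide_left_mono frac_le)
      then show ?thesis using 1 \<open>x2 > 0\<close> by (simp add: gg_def)
    qed
  next
    case 2
    show ?thesis
    proof (cases "x1 = 0")
      case True then show ?thesis using 2 by (simp add: gg_def)
    next
      case False
      then have "x1 > 0" "y1 > 0" using assms by auto
      then have "ln (x1/(y1+y2)) \<le> ln (x1/y1)" using assms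
        by (simp add: divide_left_mono frac_le)
      then show ?thesis using 2 \<open>x1 > 0\<close> by (simp add: gg_def)
    qed
  next
    case 3
    then have p: "x1 > 0" "x2 > 0" "y1 > 0" "y2 > 0" using assms by auto
    define X where "X = x1 + x2"
    define Y where "Y = y1 + y2"
    have XY: "X > 0" "Y > 0" using p by (auto simp: X_def Y_def)
    have l1: "ln (y1*X/(x1*Y)) \<le> y1*X/(x1*Y) - 1" using p XY by (intro ln_le_minus_one) simp
    have l2: "ln (y2*X/(x2*Y)) \<le> y2*X/(x2*Y) - 1" using p XY by (intro ln_le_minus_one) simp
    have e1: "ln (y1*X/(x1*Y)) = ln y1 + ln X - ln x1 - ln Y" using p XY by (simp add: ln_div ln_mult)
    have e2: "ln (y2*X/(x2*Y)) = ln y2 + ln X - ln x2 - ln Y" using p XY by (simp add: ln_div ln_mult)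
    have m1: "x1 * ln (y1*X/(x1*Y)) \<le> x1 * (y1*X/(x1*Y) - 1)" using l1 p by (intro mult_left_mono) auto
    have m2: "x2 * ln (y2*X/(x2*Y)) \<le> x2 * (y2*X/(x2*Y) - 1)" using l2 p by (intro mult_left_mono) auto
    have s1: "x1 * (y1*X/(x1*Y) - 1) = y1*X/Y - x1" using p XY by (simp add: field_simps)
    have s2: "x2 * (y2*X/(x2*Y) - 1) = y2*X/Y - x2" using p XY by (simp add: field_simps)
    have s3: "y1*X/Y + y2*X/Y = X" using XY by (simp add: Y_def add_divide_distrib[symmetric] distrib_right[symmetric])
    have s: "x1 * (y1*X/(x1*Y) - 1) + x2 * (y2*X/(x2*Y) - 1) = 0"
      using s1 s2 s3 X_def by linarith
    have "gg X Y = X * (ln X - ln Y)" using XY by (simp add: gg_def ln_div)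
    moreover have "gg x1 y1 + gg x2 y2 = x1 * (ln x1 - ln y1) + x2 * (ln x2 - ln y2)"
      using p by (simp add: gg_def ln_div)
    moreover have "X * (ln X - ln Y) - (x1 * (ln x1 - ln y1) + x2 * (ln x2 - ln y2))
       = x1 * ln (y1*X/(x1*Y)) + x2 * ln (y2*X/(x2*Y))"
      unfolding e1 e2 by (simp add: X_def algebra_simps)
    ultimately have "gg X Y \<le> gg x1 y1 + gg x2 y2" using m1 m2 s by linarith
    then show ?thesis by (simp add: X_def Y_def)
  qed
qed

lemma KL_lower:
  fixes A B :: "'a::finite \<Rightarrow> real"
  assumes "\<And>z. 0 \<le> A z" "\<And>z. 0 \<le> B z"
  shows "ereal (sum A UNIV - sum B UNIV) \<le> KL A B"
proof (cases "\<forall>a. A a \<noteq> 0 \<longrightarrow> B a \<noteq> 0")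
  case True
  have "sum A UNIV - sum B UNIV = (\<Sum>a\<in>UNIV. A a - B a)" by (simp add: sum_subtractf)
  also have "\<dots> \<le> (\<Sum>a\<in>UNIV. gg (A a) (B a))"
    by (intro sum_mono gg_lower) (use assms True in auto)
  finally show ?thesis using True by (simp add: KL_gg)
qed (auto simp add: KL_gg)

lemma KL_convex:
  fixes A1 A2 B1 B2 :: "'a::finite \<Rightarrow> real"
  assumes "0 < t" "t < 1" "\<And>z. 0 \<le> A1 z" "\<And>z. 0 \<le> A2 z" "\<And>z. 0 \<le> B1 z" "\<And>z. 0 \<le> B2 z"
    and k1: "KL A1 B1 = ereal k1" and k2: "KL A2 B2 = ereal k2"
  shows "KL (\<lambda>z. t * A1 z + (1-t) * A2 z) (\<lambda>z. t * B1 z + (1-t) * B2 z) \<le> ereal (t*k1 + (1-t)*k2)"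
proof -
  have c1: "\<forall>a. A1 a \<noteq> 0 \<longrightarrow> B1 a \<noteq> 0" and s1: "k1 = (\<Sum>a\<in>UNIV. gg (A1 a) (B1 a))"
    using k1 unfolding KL_gg by (auto split: if_splits)
  have c2: "\<forall>a. A2 a \<noteq> 0 \<longrightarrow> B2 a \<noteq> 0" and s2: "k2 = (\<Sum>a\<in>UNIV. gg (A2 a) (B2 a))"
    using k2 unfolding KL_gg by (auto split: if_splits)
  have t1: "1 - t > 0" using assms by simp
  have c: "\<forall>a. t * A1 a + (1-t) * A2 a \<noteq> 0 \<longrightarrow> t * B1 a + (1-t) * B2 a \<noteq> 0"
  proof (intro allI impI)
    fix a assume h: "t * A1 a + (1-t) * A2 a \<noteq> 0"
    then have "A1 a \<noteq> 0 \<or> A2 a \<noteq> 0" by auto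
    then have "B1 a > 0 \<or> B2 a > 0" using c1 c2 assms(5,6)[of a] by (metis less_eq_real_def)
    moreover have "t * B1 a \<ge> 0" "(1-t) * B2 a \<ge> 0" using assms t1 by auto
    ultimately have "t * B1 a + (1-t) * B2 a > 0" using assms(1) t1
      by (metis add_pos_nonneg add_nonneg_pos mult_pos_pos)
    then show "t * B1 a + (1-t) * B2 a \<noteq> 0" by simp
  qed
  have "(\<Sum>a\<in>UNIV. gg (t * A1 a + (1-t) * A2 a) (t * B1 a + (1-t) * B2 a))
      \<le> (\<Sum>a\<in>UNIV. gg (t * A1 a) (t * B1 a) + gg ((1-t) * A2 a) ((1-t) * B2 a))"
    apply (intro sum_mono logsum2)
    using assms t1 c1 c2 by auto
  also have "\<dots> = t*k1 + (1-t)*k2"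
    unfolding s1 s2 gg_scale[OF assms(1)] gg_scale[OF t1] by (simp add: sum.distrib sum_distrib_left)
  finally show ?thesis using c by (simp add: KL_gg)
qed



definition K :: "('x::finite \<Rightarrow> 'y::finite \<Rightarrow> real) \<Rightarrow> ('x \<Rightarrow> real) \<Rightarrow> ('y \<Rightarrow> real) \<Rightarrow> ereal" where
  "K W P Q = KL (\<lambda>(x,y). P x * Q y) (\<lambda>(x,y). P x * W x y)"

definition F :: "('x::finite \<Rightarrow> 'y::finite \<Rightarrow> real) \<Rightarrow> ('x \<Rightarrow> real) \<Rightarrow> ereal" where
  "F W P = (INF Q\<in>{Q. distr Q}. K W P Q)"

lemma U_F: "U W = (SUP P\<in>{P. distr P}. F W P)"
  by (simp add: U_def F_def K_def)

lemma sum_pair: "(\<Sum>z\<in>UNIV. (case z of (x,y) \<Rightarrow> f x y)) = (\<Sum>x\<in>UNIV. \<Sum>y\<in>UNIV. f x y)"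
proof -
  have "(\<Sum>x\<in>UNIV. \<Sum>y\<in>UNIV. f x y) = (\<Sum>(x,y)\<in>UNIV \<times> UNIV. f x y)"
    by (rule sum.cartesian_product)
  then show ?thesis by simp
qed

lemma distr_uniform: "distr (\<lambda>_::'a::finite. 1 / real CARD('a))"
  by (simp add: distr_def)

lemma distr_le1: "distr P \<Longrightarrow> P a \<le> 1"
proof -
  assume "distr P"
  moreover have "P a \<le> sum P UNIV" by (rule member_le_sum) (use \<open>distr P\<close> in \<open>auto simp: distr_def\<close>)
  ultimately show ?thesis by (simp add: distr_def)
qed

lemma K_nonneg:
  assumes "channel W" "distr P" "distr Q"
  shows "0 \<le> K W P Q"
proof -
  have s1: "(\<Sum>z\<in>UNIV. (case z of (x,y) \<Rightarrow> P x * Q y)) = 1"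
    using assms by (simp add: sum_pair distr_def flip: sum_distrib_left)
  have s2: "(\<Sum>z\<in>UNIV. (case z of (x,y) \<Rightarrow> P x * W x y)) = 1"
    using assms by (simp add: sum_pair distr_def channel_def flip: sum_distrib_left)
  have "ereal ((\<Sum>z\<in>UNIV. (case z of (x,y) \<Rightarrow> P x * Q y)) - (\<Sum>z\<in>UNIV. (case z of (x,y) \<Rightarrow> P x * W x y)))
     \<le> K W P Q" unfolding K_def
    by (rule KL_lower) (use assms in \<open>auto simp: distr_def channel_def split: prod.splits\<close>)
  then show ?thesis using s1 s2 by (simp add: zero_ereal_def)
qed

lemma F_nonneg: assumes "channel W" "distr P" shows "0 \<le> F W P"
  unfolding F_def by (rule INF_greatest) (use K_nonneg assms in auto)

lemma F_le_U: "distr P \<Longrightarrow> F W P \<le> U W"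
  unfolding U_F by (rule SUP_upper) auto

lemma U_nonneg: assumes "channel W" shows "0 \<le> U W"
  using F_nonneg[OF assms distr_uniform] F_le_U[OF distr_uniform] by (rule order_trans)

lemma KL_self: "KL A A = 0"
  apply (simp add: KL_gg zero_ereal_def)
  apply (rule sum.neutral)
  apply (simp add: gg_def)
  done

lemma U_zero_if_const:
  fixes W :: "'x::finite \<Rightarrow> 'y::finite \<Rightarrow> real"
  assumes "channel W" "\<forall>x x'. W x = W x'"
  shows "U W = 0"
proof (rule antisym)
  show "U W \<le> 0" unfolding U_F
  proof (rule SUP_least)
    fix P :: "'x \<Rightarrow> real" assume "P \<in> {P. distr P}"
    have "distr (W undefined)" using assms(1) by (simp add: channel_def)
    moreover have "K W P (W undefined) = 0"
    proof -
      have "W a = W undefined" for a using assms(2) by blast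
      then have "(\<lambda>(x,y). P x * W x y) = (\<lambda>(x,y). P x * W undefined y)" by (auto simp: fun_eq_iff)
      then show ?thesis unfolding K_def by (simp add: KL_self)
    qed
    ultimately show "F W P \<le> 0" unfolding F_def by (intro INF_lower2[of "W undefined"]) auto
  qed
qed (rule U_nonneg[OF assms(1)])

lemma pair_bound:
  assumes "0 \<le> q" "0 \<le> a" "0 \<le> b" "q \<noteq> 0 \<longrightarrow> a \<noteq> 0 \<and> b \<noteq> 0"
  shows "q - sqrt (a*b) \<le> gg (1/2*q) (1/2*a) + gg (1/2*q) (1/2*b)"
proof (cases "q = 0")
  case True then show ?thesis using assms by (simp add: gg_def)
next
  case False
  then have p: "q > 0" "a > 0" "b > 0" using assms by auto
  have "q - sqrt (a*b) \<le> gg q (sqrt (a*b))"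
    by (rule gg_lower) (use p in auto)
  also have "gg q (sqrt (a*b)) = q * (ln q - (ln a + ln b) / 2)"
    using p by (simp add: gg_def ln_div ln_sqrt ln_mult)
  also have "\<dots> = gg (1/2*q) (1/2*a) + gg (1/2*q) (1/2*b)"
  proof -
    have "gg (1/2*q) (1/2*a) = q/2*(ln q - ln a)" using p by (simp add: gg_def ln_div)
    moreover have "gg (1/2*q) (1/2*b) = q/2*(ln q - ln b)" using p by (simp add: gg_def ln_div)
    ultimately show ?thesis by (simp add: field_simps)
  qed
  finally show ?thesis .
qed

lemma amgm_strict: "0 \<le> a \<Longrightarrow> 0 \<le> b \<Longrightarrow> a \<noteq> b \<Longrightarrow> sqrt (a*b) < (a+b)/2"
proof -
  assume h: "0 \<le> a" "0 \<le> b" "a \<noteq> b"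
  then have "sqrt a \<noteq> sqrt b" by simp
  then have "0 < (sqrt a - sqrt b)^2" by simp
  then show ?thesis using h by (simp add: power2_eq_square algebra_simps real_sqrt_mult)
qed

lemma amgm: "0 \<le> a \<Longrightarrow> 0 \<le> b \<Longrightarrow> sqrt (a*b) \<le> (a+b)/2"
proof -
  assume h: "0 \<le> a" "0 \<le> b"
  have "0 \<le> (sqrt a - sqrt b)^2" by simp
  then show ?thesis using h by (simp add: power2_eq_square algebra_simps real_sqrt_mult)
qed

lemma U_pos_if_nonconst:
  fixes W :: "'x::finite \<Rightarrow> 'y::finite \<Rightarrow> real"
  assumes ch: "channel W" and ne: "W x \<noteq> W x'"
  shows "U W > 0"
proof -
  have xx: "x \<noteq> x'" using ne by auto
  define P :: "'x \<Rightarrow> real" where "P a = (if a = x then 1/2 else 0) + (if a = x' then 1/2 else 0)" for a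
  have P0: "P a = 0" if "a \<noteq> x" "a \<noteq> x'" for a using that by (simp add: P_def)
  have Px: "P x = 1/2" "P x' = 1/2" using xx by (auto simp: P_def)
  have dP: "distr P" unfolding distr_def
  proof
    show "\<forall>a. 0 \<le> P a" by (simp add: P_def)
    show "(\<Sum>a\<in>UNIV. P a) = 1" unfolding P_def by (simp add: sum.distrib)
  qed
  have Wnn: "\<And>a y. 0 \<le> W a y" and Ws: "\<And>a. sum (W a) UNIV = 1"
    using ch by (auto simp: channel_def distr_def)
  define Z where "Z = (\<Sum>y\<in>UNIV. sqrt (W x y * W x' y))"
  obtain y0 where y0: "W x y0 \<noteq> W x' y0" using ne by auto
  have "Z < (\<Sum>y\<in>UNIV. (W x y + W x' y) / 2)"
    unfolding Z_def
  proof (rule sum_strict_mono_ex1)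
    show "\<forall>y\<in>UNIV. sqrt (W x y * W x' y) \<le> (W x y + W x' y) / 2" using amgm Wnn by auto
    show "\<exists>y\<in>UNIV. sqrt (W x y * W x' y) < (W x y + W x' y) / 2" using amgm_strict Wnn y0 by blast
  qed simp
  also have "\<dots> = 1" using Ws by (simp add: sum.distrib flip: sum_divide_distrib)
  finally have Z1: "Z < 1" .
  have Klow: "ereal (1 - Z) \<le> K W P Q" if dQ: "distr Q" for Q
  proof (cases "\<forall>z. (\<lambda>(a,y). P a * Q y) z \<noteq> 0 \<longrightarrow> (\<lambda>(a,y). P a * W a y) z \<noteq> 0")
    case False then show ?thesis by (auto simp: K_def KL_gg)
  next
    case True
    have ac: "Q y \<noteq> 0 \<longrightarrow> W x y \<noteq> 0 \<and> W x' y \<noteq> 0" for y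
      using True[rule_format, of "(x,y)"] True[rule_format, of "(x',y)"] Px by auto
    have Qnn: "\<And>y. 0 \<le> Q y" and Qs: "sum Q UNIV = 1" using dQ by (auto simp: distr_def)
    have inner: "(\<Sum>a\<in>UNIV. gg (P a * Q y) (P a * W a y)) = gg (1/2 * Q y) (1/2 * W x y) + gg (1/2 * Q y) (1/2 * W x' y)" for y
    proof -
      have "(\<Sum>a\<in>UNIV. gg (P a * Q y) (P a * W a y)) = (\<Sum>a\<in>{x,x'}. gg (P a * Q y) (P a * W a y))"
        by (rule sum.mono_neutral_right) (auto simp: P0 gg_def)
      then show ?thesis using xx Px by simp
    qed
    have "1 - Z = (\<Sum>y\<in>UNIV. Q y - sqrt (W x y * W x' y))"
      using Qs by (simp add: Z_def sum_subtractf)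
    also have "\<dots> \<le> (\<Sum>y\<in>UNIV. gg (1/2 * Q y) (1/2 * W x y) + gg (1/2 * Q y) (1/2 * W x' y))"
      by (intro sum_mono pair_bound) (use Qnn Wnn ac in auto)
    also have "\<dots> = (\<Sum>y\<in>UNIV. \<Sum>a\<in>UNIV. gg (P a * Q y) (P a * W a y))"
      by (simp add: inner)
    also have "\<dots> = (\<Sum>a\<in>UNIV. \<Sum>y\<in>UNIV. gg (P a * Q y) (P a * W a y))"
      by (rule sum.swap)
    also have "\<dots> = (\<Sum>z\<in>UNIV. gg ((\<lambda>(a,y). P a * Q y) z) ((\<lambda>(a,y). P a * W a y) z))"
      using sum_pair[of "\<lambda>a y. gg (P a * Q y) (P a * W a y)"] by (simp add: case_prod_beta')
    finally show ?thesis using True by (simp add: K_def KL_gg)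
  qed
  have "ereal (1 - Z) \<le> F W P" unfolding F_def by (rule INF_greatest) (use Klow in auto)
  also have "\<dots> \<le> U W" by (rule F_le_U[OF dP])
  finally have "ereal (1 - Z) \<le> U W" .
  moreover have "0 < ereal (1 - Z)" using Z1 by simp
  ultimately show ?thesis by (rule order_less_le_trans[rotated])
qed

lemma U_finite_if:
  fixes W :: "'x::finite \<Rightarrow> 'y::finite \<Rightarrow> real"
  assumes ch: "channel W" and y0: "\<forall>x. W x y0 > 0"
  shows "U W < \<infinity>"
proof -
  define C where "C = (\<Sum>x\<in>UNIV. \<bar>ln (W x y0)\<bar>)"
  define Q0 :: "'y \<Rightarrow> real" where "Q0 y = (if y = y0 then 1 else 0)" for y
  have dQ0: "distr Q0" by (simp add: distr_def Q0_def)
  have "U W \<le> ereal (real (card (UNIV :: ('x \<times> 'y) set)) * C)" unfolding U_F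
  proof (rule SUP_least)
    fix P :: "'x \<Rightarrow> real" assume "P \<in> {P. distr P}"
    then have dP: "distr P" by simp
    have Pnn: "\<And>a. 0 \<le> P a" using dP by (simp add: distr_def)
    have ac: "\<forall>z. (\<lambda>(a,y). P a * Q0 y) z \<noteq> 0 \<longrightarrow> (\<lambda>(a,y). P a * W a y) z \<noteq> 0"
    proof -
      have "W a y0 \<noteq> 0" for a using y0[rule_format, of a] by linarith
      then show ?thesis by (auto simp: Q0_def)
    qed
    have tm: "gg ((\<lambda>(a,y). P a * Q0 y) z) ((\<lambda>(a,y). P a * W a y) z) \<le> C" for z
    proof (cases z)
      case (Pair a y)
      have C0: "\<bar>ln (W a y0)\<bar> \<le> C" unfolding C_def by (rule member_le_sum) auto
      have C1: "0 \<le> C" unfolding C_def by (simp add: sum_nonneg)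
      show ?thesis
      proof (cases "P a = 0 \<or> y \<noteq> y0")
        case True then show ?thesis using Pair C1 by (auto simp: gg_def Q0_def)
      next
        case False
        then have Pa: "P a > 0" "y = y0" using Pnn[of a] by auto
        have w: "W a y0 > 0" using y0 by simp
        have "gg ((\<lambda>(a,y). P a * Q0 y) z) ((\<lambda>(a,y). P a * W a y) z) = P a * ln (1 / W a y0)"
          using Pair Pa w by (simp add: gg_def Q0_def)
        also have "\<dots> \<le> P a * \<bar>ln (W a y0)\<bar>"
          using Pa w by (intro mult_left_mono) (auto simp: ln_div)
        also have "\<dots> \<le> 1 * \<bar>ln (W a y0)\<bar>"
          using distr_le1[OF dP] by (intro mult_right_mono) auto
        finally show ?thesis using C0 by simp
      qed
    qed
    have "K W P Q0 \<le> ereal (real (card (UNIV :: ('x \<times> 'y) set)) * C)"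
    proof -
      have sb: "(\<Sum>z\<in>UNIV. gg ((\<lambda>(a,y). P a * Q0 y) z) ((\<lambda>(a,y). P a * W a y) z))
         \<le> of_nat (card (UNIV :: ('x \<times> 'y) set)) * C"
        by (rule sum_bounded_above) (rule tm)
      show ?thesis using ac sb unfolding K_def KL_gg by simp
    qed
    moreover have "F W P \<le> K W P Q0" unfolding F_def using dQ0 by (auto intro: INF_lower)
    ultimately show "F W P \<le> ereal (real (card (UNIV :: ('x \<times> 'y) set)) * C)" by simp
  qed
  then show ?thesis by (rule order_le_less_trans) simp
qed

lemma U_infinite_if:
  fixes W :: "'x::finite \<Rightarrow> 'y::finite \<Rightarrow> real"
  assumes ch: "channel W" and ny: "\<forall>y. \<exists>x. \<not> W x y > 0"
  shows "U W = \<infinity>"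
proof -
  define P :: "'x \<Rightarrow> real" where "P = (\<lambda>_. 1 / real CARD('x))"
  have dP: "distr P" unfolding P_def by (rule distr_uniform)
  have Ppos: "P a \<noteq> 0" for a by (simp add: P_def)
  have "K W P Q = \<infinity>" if dQ: "distr Q" for Q
  proof -
    have "\<exists>y. Q y \<noteq> 0"
    proof (rule ccontr)
      assume "\<nexists>y. Q y \<noteq> 0"
      then have "sum Q UNIV = 0" by simp
      then show False using dQ by (simp add: distr_def)
    qed
    then obtain y where y: "Q y \<noteq> 0" by blast
    obtain x where "\<not> W x y > 0" using ny by blast
    moreover have "0 \<le> W x y" using ch by (simp add: channel_def distr_def)
    ultimately have "W x y = 0" by linarith
    then have "\<not> (\<forall>z. (\<lambda>(a,y). P a * Q y) z \<noteq> 0 \<longrightarrow> (\<lambda>(a,y). P a * W a y) z \<noteq> 0)"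
    proof -
      have "(\<lambda>(a,y). P a * Q y) (x,y) \<noteq> 0" using y Ppos[of x] by simp
      moreover have "(\<lambda>(a,y). P a * W a y) (x,y) = 0" using \<open>W x y = 0\<close> by simp
      ultimately show ?thesis by blast
    qed
    then show ?thesis unfolding K_def KL_gg by simp
  qed
  then have "\<infinity> \<le> F W P" unfolding F_def by (intro INF_greatest) simp
  then have "\<infinity> \<le> U W" using F_le_U[OF dP] by (rule order_trans)
  then show ?thesis by simp
qed

lemma K_real:
  assumes "channel W" "distr P" "distr Q" "K W P Q < \<infinity>"
  shows "\<exists>k. K W P Q = ereal k \<and> KL (\<lambda>(x,y). P x * Q y) (\<lambda>(x,y). P x * W x y) = ereal k"
  using K_nonneg[OF assms(1-3)] assms(4) unfolding K_def
  by (cases "KL (\<lambda>(x,y). P x * Q y) (\<lambda>(x,y). P x * W x y)") auto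




lemma F_convex:
  fixes W1 W2 :: "'x::finite \<Rightarrow> 'y::finite \<Rightarrow> real"
  assumes c1: "channel W1" and c2: "channel W2" and t: "0 < t" "t < 1" and dP: "distr P"
  shows "F (\<lambda>x y. t * W1 x y + (1 - t) * W2 x y) P \<le> ereal t * F W1 P + ereal (1 - t) * F W2 P"
proof -
  let ?W = "\<lambda>x y. t * W1 x y + (1 - t) * W2 x y"
  have F1: "0 \<le> F W1 P" and F2: "0 \<le> F W2 P" using F_nonneg c1 c2 dP by auto
  show ?thesis
  proof (cases "F W1 P = \<infinity> \<or> F W2 P = \<infinity>")
    case True
    have eq: "ereal t * F W1 P + ereal (1 - t) * F W2 P = \<infinity>"
      using True t F1 F2 by (auto simp: ereal_mult_infty)
    show ?thesis unfolding eq by simp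
  next
    case False
    have a1: "F W1 P \<noteq> \<infinity>" "F W1 P \<noteq> -\<infinity>" and a2: "F W2 P \<noteq> \<infinity>" "F W2 P \<noteq> -\<infinity>"
      using False F1 F2 by auto
    obtain f1 where f1: "F W1 P = ereal f1" using a1 by (cases "F W1 P") auto
    obtain f2 where f2: "F W2 P = ereal f2" using a2 by (cases "F W2 P") auto
    have "F ?W P \<le> ereal (t*f1 + (1-t)*f2) + ereal e" if e: "0 < e" for e
    proof -
      have "F W1 P < ereal (f1 + e)" using f1 e by simp
      then obtain Q1 where dQ1: "distr Q1" and lt1: "K W1 P Q1 < ereal (f1 + e)"
        unfolding F_def by (auto simp: INF_less_iff)
      have "F W2 P < ereal (f2 + e)" using f2 e by simp
      then obtain Q2 where dQ2: "distr Q2" and lt2: "K W2 P Q2 < ereal (f2 + e)"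
        unfolding F_def by (auto simp: INF_less_iff)
      obtain k1 where k1: "K W1 P Q1 = ereal k1" "KL (\<lambda>(x,y). P x * Q1 y) (\<lambda>(x,y). P x * W1 x y) = ereal k1"
        using K_real[OF c1 dP dQ1 order.strict_trans[OF lt1 ereal_less_PInfty]] by auto
      obtain k2 where k2: "K W2 P Q2 = ereal k2" "KL (\<lambda>(x,y). P x * Q2 y) (\<lambda>(x,y). P x * W2 x y) = ereal k2"
        using K_real[OF c2 dP dQ2 order.strict_trans[OF lt2 ereal_less_PInfty]] by auto
      have kk1: "k1 < f1 + e" using lt1 k1 by simp
      have kk2: "k2 < f2 + e" using lt2 k2 by simp
      define Q where "Q y = t * Q1 y + (1 - t) * Q2 y" for y
      have dQ: "distr Q" using dQ1 dQ2 t
        by (auto simp: distr_def Q_def sum.distrib simp flip: sum_distrib_left)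
      have Pnn: "\<And>a. 0 \<le> P a" using dP by (simp add: distr_def)
      have eqA: "(\<lambda>(x,y). P x * Q y) = (\<lambda>z. t * (\<lambda>(x,y). P x * Q1 y) z + (1 - t) * (\<lambda>(x,y). P x * Q2 y) z)"
        by (auto simp: fun_eq_iff Q_def algebra_simps)
      have eqB: "(\<lambda>(x,y). P x * ?W x y) = (\<lambda>z. t * (\<lambda>(x,y). P x * W1 x y) z + (1 - t) * (\<lambda>(x,y). P x * W2 x y) z)"
        by (auto simp: fun_eq_iff algebra_simps)
      have "F ?W P \<le> K ?W P Q" unfolding F_def using dQ by (auto intro: INF_lower)
      also have "\<dots> \<le> ereal (t*k1 + (1-t)*k2)"
        unfolding K_def eqA eqB
        by (rule KL_convex[OF t _ _ _ _ k1(2) k2(2)])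
          (use Pnn dQ1 dQ2 c1 c2 in \<open>auto simp: distr_def channel_def split: prod.splits\<close>)
      also have "\<dots> \<le> ereal (t*f1 + (1-t)*f2) + ereal e"
      proof -
        have "t*k1 \<le> t*(f1+e)" using kk1 t by (intro mult_left_mono) auto
        moreover have "(1-t)*k2 \<le> (1-t)*(f2+e)" using kk2 t by (intro mult_left_mono) auto
        ultimately show ?thesis by (simp add: algebra_simps)
      qed
      finally show ?thesis .
    qed
    then have "F ?W P \<le> ereal (t*f1 + (1-t)*f2)" by (rule ereal_le_epsilon2)
    then show ?thesis using f1 f2 by simp
  qed
qed

lemma U_convex:
  fixes W1 W2 :: "'x::finite \<Rightarrow> 'y::finite \<Rightarrow> real"
  assumes c1: "channel W1" and c2: "channel W2" and t: "0 \<le> t" "t \<le> 1"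
  shows "U (\<lambda>x y. t * W1 x y + (1 - t) * W2 x y) \<le> ereal t * U W1 + ereal (1 - t) * U W2"
proof -
  consider "t = 0" | "t = 1" | "0 < t \<and> t < 1" using t by linarith
  then show ?thesis
  proof cases
    case 1 then show ?thesis by (simp add: zero_ereal_def[symmetric])
  next
    case 2 then show ?thesis by (simp add: zero_ereal_def[symmetric])
  next
    case 3
    show ?thesis unfolding U_F[of "\<lambda>x y. t * W1 x y + (1 - t) * W2 x y"]
    proof (rule SUP_least)
      fix P :: "'x \<Rightarrow> real" assume "P \<in> {P. distr P}"
      then have dP: "distr P" by simp
      have "F (\<lambda>x y. t * W1 x y + (1 - t) * W2 x y) P \<le> ereal t * F W1 P + ereal (1 - t) * F W2 P"
        using F_convex[OF c1 c2 _ _ dP] 3 by auto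
      also have "\<dots> \<le> ereal t * U W1 + ereal (1 - t) * U W2"
        using 3 F_le_U[OF dP] by (intro add_mono ereal_mult_left_mono) auto
      finally show "F (\<lambda>x y. t * W1 x y + (1 - t) * W2 x y) P \<le> ereal t * U W1 + ereal (1 - t) * U W2" .
    qed
  qed
qed


theorem mainTheorem18:
  fixes W :: "'x::finite \<Rightarrow> 'y::finite \<Rightarrow> real"
  assumes "channel W"
  shows "(U W \<ge> 0 \<and> (U W = 0 \<longleftrightarrow> (\<forall>x x'. W x = W x')))
    \<and> (U W < \<infinity> \<longleftrightarrow> (\<exists>y. \<forall>x. W x y > 0))
    \<and> (\<forall>(W1 :: 'x \<Rightarrow> 'y \<Rightarrow> real) W2 (t::real). channel W1 \<and> channel W2 \<and> 0 \<le> t \<and> t \<le> 1 \<longrightarrow>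
           U (\<lambda>x y. t * W1 x y + (1 - t) * W2 x y) \<le> ereal t * U W1 + ereal (1 - t) * U W2)"
proof (intro conjI)
  show "U W \<ge> 0" by (rule U_nonneg[OF assms])
  show "U W = 0 \<longleftrightarrow> (\<forall>x x'. W x = W x')"
  proof
    assume h: "U W = 0"
    show "\<forall>x x'. W x = W x'"
    proof (rule ccontr)
      assume "\<not> (\<forall>x x'. W x = W x')"
      then obtain x x' where "W x \<noteq> W x'" by blast
      from U_pos_if_nonconst[OF assms this] h show False by simp
    qed
  next
    assume "\<forall>x x'. W x = W x'"
    then show "U W = 0" by (rule U_zero_if_const[OF assms])
  qed
  show "U W < \<infinity> \<longleftrightarrow> (\<exists>y. \<forall>x. W x y > 0)"
  proof
    assume h: "U W < \<infinity>"
    show "\<exists>y. \<forall>x. W x y > 0"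
    proof (rule ccontr)
      assume "\<not> (\<exists>y. \<forall>x. W x y > 0)"
      then have "\<forall>y. \<exists>x. \<not> W x y > 0" by blast
      from U_infinite_if[OF assms this] h show False by simp
    qed
  next
    assume "\<exists>y. \<forall>x. W x y > 0"
    then obtain y where "\<forall>x. W x y > 0" by blast
    then show "U W < \<infinity>" by (rule U_finite_if[OF assms])
  qed
  show "\<forall>(W1 :: 'x \<Rightarrow> 'y \<Rightarrow> real) W2 (t::real). channel W1 \<and> channel W2 \<and> 0 \<le> t \<and> t \<le> 1 \<longrightarrow>
           U (\<lambda>x y. t * W1 x y + (1 - t) * W2 x y) \<le> ereal t * U W1 + ereal (1 - t) * U W2"
    using U_convex by blast
qed

end
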